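(* Let $r$, $s$, $c$ and $a_n$ be any integers and let $n$ be a positive integer, and assume $V_r\neq0$. Then \[ \sum_{a_{n-1}=c}^{a_n}\sum_{a_{n-2}=c}^{a_{n-1}}\cdots\sum_{a_0=c}^{a_1}\frac{(-1)^{a_0}W_{2ra_0+s}}{q^{ra_0}} =(-1)^{a_n}\frac{W_{r(2a_n+n)+s}}{q^{ra_n}V_r^n}+\frac{(-1)^c}{q^{r(c-1)}}\sum_{j=0}^{n-1}\frac{W_{r(n-j+2c-2)+s}}{V_r^{n-j}}\binom{a_n+j-c}{j}. \]
   Context: Let $a,b,p,q$ be complex numbers with $p\neq0$, $q\neq0$. The Horadam sequence $W_j=W_j(a,b;p,q)$ is defined by $W_0=a$, $W_1=b$, $W_j=pW_{j-1}-qW_{j-2}$ for $j\ge2$, and extended to negative indices by $W_{-m}=(pW_{-m+1}-W_{-m+2})/q$, so the recurrence holds for all integers. $V_j=W_j(2,p;p,q)$ is the Lucas sequence of the second kind. For integers $c,m$ and a function $f$ on the integers, $\sum_{k=c}^m f(k)$ denotes the usual sum if $m\ge c$, equals $0$ if $m=c-1$, and equals $-\sum_{k=m+1}^{c-1}f(k)$ if $m\le c-2$. The nested sum $\sum_{a_{n-1}=c}^{a_n}\cdots\sum_{a_0=c}^{a_1}g(a_0)$ is the iterated sum with $n$ summation signs: innermost over $a_0$ from $c$ to $a_1$, then $a_1$ from $c$ to $a_2$, ..., outermost $a_{n-1}$ from $c$ to $a_n$. For an integer $j\ge0$ and any number $y$, $\binom{y}{j}=y(y-1)\cdots(y-j+1)/j!$.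 *)

theory Defs
  imports Complex_Main
begin

fun hor_pos :: "complex \<Rightarrow> complex \<Rightarrow> complex \<Rightarrow> complex \<Rightarrow> nat \<Rightarrow> complex" where
  "hor_pos a b p q 0 = a"
| "hor_pos a b p q (Suc 0) = b"
| "hor_pos a b p q (Suc (Suc j)) = p * hor_pos a b p q (Suc j) - q * hor_pos a b p q j"

(* hor_neg a b p q m = W_{-m}, via W_{-m} = (p W_{-m+1} - W_{-m+2}) / q *)
fun hor_neg :: "complex \<Rightarrow> complex \<Rightarrow> complex \<Rightarrow> complex \<Rightarrow> nat \<Rightarrow> complex" where
  "hor_neg a b p q 0 = a"
| "hor_neg a b p q (Suc 0) = (p * a - b) / q"
| "hor_neg a b p q (Suc (Suc m)) = (p * hor_neg a b p q (Suc m) - hor_neg a b p q m) / q"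

definition horadam :: "complex \<Rightarrow> complex \<Rightarrow> complex \<Rightarrow> complex \<Rightarrow> int \<Rightarrow> complex" where
  "horadam a b p q j = (if 0 \<le> j then hor_pos a b p q (nat j) else hor_neg a b p q (nat (- j)))"

definition lucasV :: "complex \<Rightarrow> complex \<Rightarrow> int \<Rightarrow> complex" where
  "lucasV p q j = horadam 2 p p q j"

(* generalized sum convention sum_{k=c}^m f(k) *)
definition gsum :: "int \<Rightarrow> int \<Rightarrow> (int \<Rightarrow> complex) \<Rightarrow> complex" where
  "gsum c m f = (if c \<le> m then (\<Sum>k\<in>{c..m}. f k)
                 else if m = c - 1 then 0
                 else - (\<Sum>k\<in>{m+1..c-1}. f k))"

(* nested c n g x = sum_{a_{n-1}=c}^{x} ... sum_{a_0=c}^{a_1} g(a_0)  (n summation signs) *)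
fun nested :: "int \<Rightarrow> nat \<Rightarrow> (int \<Rightarrow> complex) \<Rightarrow> int \<Rightarrow> complex" where
  "nested c 0 g = g"
| "nested c (Suc n) g = (\<lambda>x. gsum c x (nested c n g))"

end

theory Submission
  imports Defs
begin

lemma hor_rec:
  assumes q: "q \<noteq> 0"
  shows "horadam a b p q (j+2) = p * horadam a b p q (j+1) - q * horadam a b p q j"
proof -
  consider "j \<ge> 0" | "j = -1" | "j = -2" | "j \<le> -3" by linarith
  then show ?thesis
  proof cases
    case 1
    then obtain m where m: "j = int m" by (metis nonneg_eq_int)
    have "nat (int m + 2) = Suc (Suc m)" "nat (int m + 1) = Suc m" by auto
    then show ?thesis using m by (simp add: horadam_def)
  next
    case 2
    then show ?thesis using q by (simp add: horadam_def field_simps)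
  next
    case 3
    have "nat 2 = Suc (Suc 0)" by simp
    then show ?thesis using 3 q by (simp add: horadam_def field_simps numeral_2_eq_2)
  next
    case 4
    then obtain m where m: "j = - int m - 3" by (metis add.commute diff_add_cancel diff_minus_eq_add minus_diff_eq nonneg_eq_int le_diff_eq add_le_same_cancel1 neg_0_le_iff_le uminus_add_conv_diff)
    have e: "nat (- (- int m - 3 + 2)) = Suc m" "nat (- (- int m - 3 + 1)) = Suc (Suc m)" "nat (- (- int m - 3)) = Suc (Suc (Suc m))" by auto
    show ?thesis using q unfolding m horadam_def using e by (simp add: field_simps)
  qed
qed

lemma rec_unique:
  fixes f g :: "int \<Rightarrow> complex"
  assumes q: "q \<noteq> 0"
    and rf: "\<And>j. f (j+2) = p * f (j+1) - q * f j"
    and rg: "\<And>j. g (j+2) = p * g (j+1) - q * g j"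
    and f0: "f 0 = g 0" and f1: "f 1 = g 1"
  shows "f j = g j"
proof -
  have P: "f (int m) = g (int m) \<and> f (int m + 1) = g (int m + 1)" for m
  proof (induction m)
    case 0 then show ?case using f0 f1 by simp
  next
    case (Suc m)
    have "f (int m + 2) = g (int m + 2)" using rf[of "int m"] rg[of "int m"] Suc by simp
    moreover have "int (Suc m) = int m + 1" "int (Suc m) + 1 = int m + 2" by auto
    ultimately show ?case using Suc by presburger
  qed
  have N: "f (- int m) = g (- int m) \<and> f (1 - int m) = g (1 - int m)" for m
  proof (induction m)
    case 0 then show ?case using f0 f1 by simp
  next
    case (Suc m)
    have a: "f (- int m - 1 + 2) = p * f (- int m - 1 + 1) - q * f (- int m - 1)" by (rule rf)
    have b: "g (- int m - 1 + 2) = p * g (- int m - 1 + 1) - q * g (- int m - 1)" by (rule rg)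
    have e1: "- int m - 1 + 2 = 1 - int m" "- int m - 1 + 1 = - int m" by auto
    have "q * f (- int m - 1) = q * g (- int m - 1)" using a b Suc unfolding e1 by (simp add: algebra_simps)
    then have "f (- int m - 1) = g (- int m - 1)" using q by simp
    moreover have h: "- int (Suc m) = - int m - 1" "1 - int (Suc m) = - int m" by auto
    ultimately show ?case using Suc unfolding h by blast
  qed
  show ?thesis
  proof (cases "j \<ge> 0")
    case True then show ?thesis using P[of "nat j"] by simp
  next
    case False then show ?thesis using N[of "nat (-j)"] by simp
  qed
qed

lemma hor_id:
  assumes q: "q \<noteq> 0"
  shows "horadam a b p q (m + r) + q powi r * horadam a b p q (m - r) = lucasV p q r * horadam a b p q m"
proof -
  let ?W = "horadam a b p q"
  have "(\<lambda>r. ?W (m + r) + q powi r * ?W (m - r)) r = (\<lambda>r. lucasV p q r * ?W m) r"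
  proof (rule rec_unique[OF q, where p = p and f = "\<lambda>r. ?W (m + r) + q powi r * ?W (m - r)" and g = "\<lambda>r. lucasV p q r * ?W m"])
    fix j
    have r1: "?W (m + j + 2) = p * ?W (m + j + 1) - q * ?W (m+j)" by (rule hor_rec[OF q])
    have r2: "?W (m - j - 2 + 2) = p * ?W (m - j - 2 + 1) - q * ?W (m - j - 2)" by (rule hor_rec[OF q])
    have e: "m - j - 2 + 2 = m - j" "m - j - 2 + 1 = m - (j+1)" "m - j - 2 = m - (j+2)"
      "m + j + 2 = m + (j+2)" "m + j + 1 = m + (j+1)" by auto
    have p2: "q powi (j+2) = q powi (j+1) * q" "q powi (j+1) = q powi j * q"
      using q by (simp_all add: power_int_add_1 power_int_add power2_eq_square)
    show "?W (m + (j + 2)) + q powi (j + 2) * ?W (m - (j + 2)) =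
        p * (?W (m + (j + 1)) + q powi (j + 1) * ?W (m - (j + 1))) - q * (?W (m + j) + q powi j * ?W (m - j))"
    proof -
      have r1': "?W (m + (j + 2)) = p * ?W (m + (j+1)) - q * ?W (m+j)" using r1 unfolding e .
      have r2': "q * ?W (m - (j+2)) = p * ?W (m - (j+1)) - ?W (m - j)" using r2 unfolding e by (simp add: algebra_simps diff_diff_eq)
      have "q powi (j + 2) * ?W (m - (j + 2)) = q powi j * q * (q * ?W (m - (j+2)))"
        unfolding p2 by (simp add: algebra_simps)
      also have "\<dots> = q powi j * q * (p * ?W (m - (j + 1)) - ?W (m - j))" by (simp only: r2')
      finally have h: "q powi (j + 2) * ?W (m - (j + 2)) = q powi j * q * (p * ?W (m - (j + 1)) - ?W (m - j))" .
      have "q powi (j + 1) = q powi j * q" by (rule p2(2))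
      then show ?thesis unfolding h r1' by (simp add: algebra_simps)
    qed
  next
    fix j
    have L: "lucasV p q (j+2) = p * lucasV p q (j+1) - q * lucasV p q j"
      unfolding lucasV_def by (rule hor_rec[OF q])
    show "lucasV p q (j+2) * ?W m = p * (lucasV p q (j+1) * ?W m) - q * (lucasV p q j * ?W m)"
      unfolding L by (simp add: algebra_simps)
  next
    show "?W (m + 0) + q powi 0 * ?W (m - 0) = lucasV p q 0 * ?W m"
      by (simp add: lucasV_def horadam_def)
  next
    have "horadam 2 p p q 1 = p" by (simp add: horadam_def)
    then show "?W (m + 1) + q powi 1 * ?W (m - 1) = lucasV p q 1 * ?W m"
      using hor_rec[OF q, of a b p "m - 1"] by (simp add: lucasV_def algebra_simps)
  qed
  then show ?thesis by simp
qed

lemma sum_tele: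
  fixes g F :: "int \<Rightarrow> complex"
  assumes d: "\<And>k. g k = F k - F (k - 1)"
  shows "(\<Sum>k\<in>{c..c - 1 + int m}. g k) = F (c - 1 + int m) - F (c - 1)"
proof (induction m)
  case 0 then show ?case by simp
next
  case (Suc m)
  have "{c..c - 1 + int (Suc m)} = insert (c + int m) {c..c - 1 + int m}" by auto
  then have "(\<Sum>k\<in>{c..c - 1 + int (Suc m)}. g k) = g (c + int m) + (\<Sum>k\<in>{c..c - 1 + int m}. g k)" by simp
  also have "\<dots> = (F (c + int m) - F (c - 1 + int m)) + (F (c - 1 + int m) - F (c - 1))"
  proof -
    have h2: "g (c + int m) = F (c + int m) - F (c - 1 + int m)" using d[of "c + int m"]
      by (simp add: algebra_simps)
    show ?thesis by (simp only: h2 Suc.IH)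
  qed
  also have "\<dots> = F (c - 1 + int (Suc m)) - F (c - 1)" by (simp add: algebra_simps)
  finally show ?case .
qed

lemma gsum_tele:
  fixes g F :: "int \<Rightarrow> complex"
  assumes d: "\<And>k. g k = F k - F (k - 1)"
  shows "gsum c x g = F x - F (c - 1)"
proof -
  consider "c \<le> x" | "x = c - 1" | "x < c - 1" by linarith
  then show ?thesis
  proof cases
    case 1
    then show ?thesis using sum_tele[where g=g and F=F, OF d, of c "nat (x - c + 1)"] by (simp add: gsum_def)
  next
    case 2 then show ?thesis by (simp add: gsum_def)
  next
    case 3
    then show ?thesis using sum_tele[where g=g and F=F, OF d, of "x+1" "nat (c - 1 - x)"] by (simp add: gsum_def)
  qed
qed


definition TT :: "complex \<Rightarrow> complex \<Rightarrow> complex \<Rightarrow> complex \<Rightarrow> int \<Rightarrow> int \<Rightarrow> nat \<Rightarrow> int \<Rightarrow> complex" where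
  "TT a b p q r s n x = (-1) powi x * horadam a b p q (r * (2 * x + int n) + s) / (q powi (r * x) * lucasV p q r ^ n)"

definition CC :: "complex \<Rightarrow> complex \<Rightarrow> complex \<Rightarrow> complex \<Rightarrow> int \<Rightarrow> int \<Rightarrow> int \<Rightarrow> nat \<Rightarrow> int \<Rightarrow> complex" where
  "CC a b p q r s c n x = (\<Sum>j<n. horadam a b p q (r * (int n - int j + 2 * c - 2) + s) / lucasV p q r ^ (n - j)
           * ((of_int (x + int j - c) :: complex) gchoose j))"

lemma pm1: "(-1::complex) powi (k - 1) = - ((-1) powi k)"
  by (simp add: power_int_diff)

lemma qpow: "q \<noteq> 0 \<Longrightarrow> (q::complex) powi (r * (k - 1)) = q powi (r * k) / q powi r"
  by (simp add: power_int_diff right_diff_distrib)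

lemma TT_diff:
  assumes q: "q \<noteq> 0" and V: "lucasV p q r \<noteq> 0"
  shows "TT a b p q r s (Suc n) k - TT a b p q r s (Suc n) (k - 1) = TT a b p q r s n k"
proof -
  let ?W = "horadam a b p q" and ?V = "lucasV p q r"
  define m where "m = r * (2 * k + int n) + s"
  have e1: "r * (2 * k + int (Suc n)) + s = m + r" unfolding m_def by (simp add: algebra_simps)
  have e2: "r * (2 * (k - 1) + int (Suc n)) + s = m - r" unfolding m_def by (simp add: algebra_simps)
  have id: "?W (m + r) + q powi r * ?W (m - r) = ?V * ?W m" by (rule hor_id[OF q])
  have qr: "q powi r \<noteq> 0" "q powi (r * k) \<noteq> 0" using q by auto
  have "TT a b p q r s (Suc n) k - TT a b p q r s (Suc n) (k - 1)
     = (-1) powi k * (?W (m + r) + q powi r * ?W (m - r)) / (q powi (r * k) * ?V ^ Suc n)"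
    unfolding TT_def e1 e2 pm1 qpow[OF q] using qr V q by (simp add: field_simps)
  also have "\<dots> = (-1) powi k * ?W m / (q powi (r * k) * ?V ^ n)"
    unfolding id using V qr q by (simp add: field_simps)
  also have "\<dots> = TT a b p q r s n k" unfolding TT_def m_def by simp
  finally show ?thesis .
qed

lemma CC_diff:
  "CC a b p q r s c (Suc n) k - CC a b p q r s c (Suc n) (k - 1) = CC a b p q r s c n k"
proof -
  let ?W = "horadam a b p q" and ?V = "lucasV p q r"
  let ?w = "\<lambda>j. ?W (r * (int (Suc n) - int j + 2 * c - 2) + s) / ?V ^ (Suc n - j)"
  let ?B = "\<lambda>x j. (of_int (x + int j - c) :: complex) gchoose j"
  have "CC a b p q r s c (Suc n) k - CC a b p q r s c (Suc n) (k - 1)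
      = (\<Sum>j<Suc n. ?w j * (?B k j - ?B (k - 1) j))"
    unfolding CC_def by (simp add: sum_subtractf right_diff_distrib)
  also have "\<dots> = ?w 0 * (?B k 0 - ?B (k - 1) 0) + (\<Sum>i<n. ?w (Suc i) * (?B k (Suc i) - ?B (k - 1) (Suc i)))"
    by (rule sum.lessThan_Suc_shift)
  also have "\<dots> = (\<Sum>i<n. ?w (Suc i) * ?B k i)"
  proof -
    have "?B k (Suc i) - ?B (k - 1) (Suc i) = ?B k i" for i
    proof -
      have h1: "(of_int (k + int (Suc i) - c) :: complex) = of_int (k + int i - c) + 1" by simp
      have h2: "(of_int (k - 1 + int (Suc i) - c) :: complex) = of_int (k + int i - c)" by simp
      show ?thesis unfolding h1 h2 gbinomial_Suc_Suc by simp
    qed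
    then show ?thesis by simp
  qed
  also have "\<dots> = CC a b p q r s c n k"
    unfolding CC_def by (intro sum.cong refl) (simp add: algebra_simps)
  finally show ?thesis .
qed

lemma zero_at:
  "TT a b p q r s (Suc n) (c - 1) + (-1) powi c / q powi (r * (c - 1)) * CC a b p q r s c (Suc n) (c - 1) = 0"
proof -
  let ?W = "horadam a b p q" and ?V = "lucasV p q r"
  have "CC a b p q r s c (Suc n) (c - 1) = ?W (r * (int (Suc n) + 2 * c - 2) + s) / ?V ^ Suc n"
  proof -
    have z: "(of_int (c - 1 + int (Suc i) - c) :: complex) gchoose (Suc i) = 0" for i
    proof -
      have "(of_int (c - 1 + int (Suc i) - c) :: complex) = of_nat i" by simp
      then show ?thesis by (simp flip: binomial_gbinomial)
    qed
    have z2: "(of_nat i :: complex) gchoose (Suc i) = 0" for i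
      by (simp flip: binomial_gbinomial)
    show ?thesis unfolding CC_def sum.lessThan_Suc_shift by (simp add: z z2)
  qed
  moreover have "r * (2 * (c - 1) + int (Suc n)) + s = r * (int (Suc n) + 2 * c - 2) + s" by (simp add: algebra_simps)
  ultimately show ?thesis unfolding TT_def pm1 by (simp add: field_simps)
qed


lemma main_nested:
  assumes q: "q \<noteq> 0" and V: "lucasV p q r \<noteq> 0"
  shows "nested c n (TT a b p q r s 0) x
     = TT a b p q r s n x + (-1) powi c / q powi (r * (c - 1)) * CC a b p q r s c n x"
proof (induction n arbitrary: x)
  case 0
  then show ?case by (simp add: CC_def)
next
  case (Suc n)
  let ?K = "(-1) powi c / q powi (r * (c - 1))"
  let ?R = "\<lambda>n x. TT a b p q r s n x + ?K * CC a b p q r s c n x"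
  have fn: "nested c n (TT a b p q r s 0) = ?R n" using Suc.IH by auto
  have d: "?R n k = ?R (Suc n) k - ?R (Suc n) (k - 1)" for k
  proof -
    have "?R (Suc n) k - ?R (Suc n) (k - 1) = (TT a b p q r s (Suc n) k - TT a b p q r s (Suc n) (k - 1))
      + ?K * (CC a b p q r s c (Suc n) k - CC a b p q r s c (Suc n) (k - 1))"
      by (simp add: algebra_simps)
    also have "\<dots> = ?R n k" unfolding TT_diff[OF q V] CC_diff ..
    finally show ?thesis by simp
  qed
  have "nested c (Suc n) (TT a b p q r s 0) x = gsum c x (?R n)" using fn by simp
  also have "\<dots> = ?R (Suc n) x - ?R (Suc n) (c - 1)" by (rule gsum_tele[where g = "?R n" and F = "?R (Suc n)", OF d])
  also have "\<dots> = ?R (Suc n) x" using zero_at[of a b p q r s n c] by simp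
  finally show ?case .
qed

theorem theorem4:
  fixes a b p q :: complex and r s c an :: int and n :: nat
  assumes "p \<noteq> 0" and "q \<noteq> 0" and "0 < n" and "lucasV p q r \<noteq> 0"
  shows "nested c n (\<lambda>a0. (-1) powi a0 * horadam a b p q (2 * r * a0 + s) / q powi (r * a0)) an
    = (-1) powi an * horadam a b p q (r * (2 * an + int n) + s) / (q powi (r * an) * lucasV p q r ^ n)
      + (-1) powi c / q powi (r * (c - 1)) *
        (\<Sum>j = 0..n - 1. horadam a b p q (r * (int n - int j + 2 * c - 2) + s) / lucasV p q r ^ (n - j)
           * ((of_int (an + int j - c) :: complex) gchoose j))"
proof -
  have g: "(\<lambda>a0. (-1) powi a0 * horadam a b p q (2 * r * a0 + s) / q powi (r * a0)) = TT a b p q r s 0"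
    by (rule ext) (simp add: TT_def algebra_simps)
  have st: "{0..n - 1} = {..<n}" using assms(3) by auto
  show ?thesis unfolding g main_nested[OF assms(2) assms(4)] st
    by (simp add: TT_def CC_def)
qed

end
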